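(* Let $m,n\ge0$, $\phi=w_m^+$ and $\tau=w_n^-$. Then the minimal element (in Bruhat order) of $W_{\Lambda_1}\,I(\tau^{-1})\,\phi\,W_{\Lambda_0}$ is $w_\ell^+$, where $\ell=\max(0,m-n)$ if $m\equiv n\pmod 2$, and $\ell=\max(0,m-n-1)$ if $m\not\equiv n\pmod 2$.
   Context: $W$ is the Weyl group of the affine Kac–Moody algebra $\widehat{\mathfrak{sl}_2}$, generated by the simple reflections $s_0,s_1$; $W_{\Lambda_0}$ and $W_{\Lambda_1}$ are the stabilizers of the fundamental weights $\Lambda_0,\Lambda_1$ (generated by $s_1$, resp. $s_0$). For $k\ge0$, $w_k^+$ (resp. $w_k^-$) is the alternating product of $k$ simple reflections ending on the right with $s_0$ (resp. $s_1$), e.g. $w_3^+=s_0s_1s_0$; $w_0^\pm=1$. For $x\in W$, $I(x)=\{\sigma\in W:\sigma\le x\}$ is the Bruhat ideal generated by $x$, and for $y\in W$, $I(x)y=\{\sigma y:\sigma\in I(x)\}$. *)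

theory Defs
  imports Main "HOL-Library.Sublist"
begin

text \<open>The Weyl group W of affine sl_2 is the infinite dihedral group, the Coxeter group
 generated by s0, s1 with only relations s0^2 = s1^2 = 1 (free product Z2 * Z2).
 We represent a group element by its unique reduced word: a list over the letters
 0 (for s0) and 1 (for s1) with no two adjacent letters equal. The word is read left to
 right, so [a1,...,ak] stands for s_a1 ... s_ak.\<close>

definition reduced :: "nat list \<Rightarrow> bool" where
  "reduced w \<longleftrightarrow> set w \<subseteq> {0,1} \<and> (\<forall>i. Suc i < length w \<longrightarrow> w ! i \<noteq> w ! Suc i)"

definition Wgrp :: "nat list set" where
  "Wgrp = {w. reduced w}"

fun ev :: "nat list \<Rightarrow> nat list" where
  "ev [] = []"
| "ev (a # ws) = (case ev ws of [] \<Rightarrow> [a] | b # r \<Rightarrow> (if a = b then r else a # b # r))"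

definition wmult :: "nat list \<Rightarrow> nat list \<Rightarrow> nat list" where
  "wmult u v = ev (u @ v)"

definition winv :: "nat list \<Rightarrow> nat list" where
  "winv u = rev u"

text \<open>Bruhat order via the subword property: sigma \<le> x iff some subword of the (unique)
 reduced expression of x multiplies to sigma.\<close>
definition bruhat_le :: "nat list \<Rightarrow> nat list \<Rightarrow> bool" where
  "bruhat_le \<sigma> x \<longleftrightarrow> \<sigma> \<in> Wgrp \<and> x \<in> Wgrp \<and> (\<exists>ys. subseq ys x \<and> ev ys = \<sigma>)"

definition bruhat_ideal :: "nat list \<Rightarrow> nat list set" where
  "bruhat_ideal x = {\<sigma> \<in> Wgrp. bruhat_le \<sigma> x}"

definition W_Lambda0 :: "nat list set" where "W_Lambda0 = {[], [1]}"
definition W_Lambda1 :: "nat list set" where "W_Lambda1 = {[], [0]}"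

text \<open>w_k^+ : alternating product of k simple reflections ending on the right with s0;
 w_k^- : ending on the right with s1.\<close>
definition wplus :: "nat \<Rightarrow> nat list" where
  "wplus k = rev (map (\<lambda>j. if even j then 0 else 1) [0..<k])"
definition wminus :: "nat \<Rightarrow> nat list" where
  "wminus k = rev (map (\<lambda>j. if even j then 1 else 0) [0..<k])"

definition dcoset :: "nat list set \<Rightarrow> nat list \<Rightarrow> nat list \<Rightarrow> nat list set \<Rightarrow> nat list set" where
  "dcoset A x y B = {wmult (wmult (wmult a \<sigma>) y) b | a \<sigma> b. a \<in> A \<and> \<sigma> \<in> bruhat_ideal x \<and> b \<in> B}"

end

theory Submission imports Defs begin

fun act :: "nat \<Rightarrow> int \<Rightarrow> int" where "act a x = (if a = 0 then -x else 4 - x)"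
definition pt :: "nat list \<Rightarrow> int" where "pt w = foldr act w 1"

lemma foldr_ev: "foldr act (ev w) x = foldr act w x"
  by (induction w) (auto split: list.splits)

lemma foldr_aff: "foldr act w x = (if even (length w) then 1 else -1)*(x-1) + pt w"
  by (induction w) (auto simp: pt_def)

lemma foldr_wmult: "foldr act (wmult u v) x = foldr act u (foldr act v x)"
  by (simp add: wmult_def foldr_ev)

lemma set_ev: "set (ev w) \<subseteq> set w"
  by (induction w) (auto split: list.splits)

lemma reduced_Nil[simp]: "reduced []" by (simp add: reduced_def)

lemma reduced_Cons: "reduced (a#w) \<longleftrightarrow> a \<in> {0,1} \<and> reduced w \<and> (w \<noteq> [] \<longrightarrow> a \<noteq> hd w)"
  apply (cases w)
   apply (auto simp: reduced_def nth_Cons split: nat.splits)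
  done

lemma reduced_ev: "set w \<subseteq> {0,1} \<Longrightarrow> reduced (ev w)"
  by (induction w) (auto split: list.splits simp: reduced_Cons)

lemma ev_reduced: "reduced w \<Longrightarrow> ev w = w"
  by (induction w) (auto simp: reduced_Cons split: list.splits)

lemma length_ev: "length (ev w) \<le> length w"
  by (induction w) (auto split: list.splits)

lemma pt_reduced: "reduced w \<Longrightarrow> pt w = (if w = [] then 1 else if hd w = 1 then 2*int (length w) + 1 else 1 - 2*int (length w))"
proof (induction w)
  case Nil then show ?case by (simp add: pt_def)
next
  case (Cons a w)
  then have r: "reduced w" "a \<in> {0,1}" "w \<noteq> [] \<Longrightarrow> a \<noteq> hd w" by (auto simp: reduced_Cons)
  have "pt (a#w) = act a (pt w)" by (simp add: pt_def)
  moreover have "hd w = 0 \<or> hd w = 1" if "w \<noteq> []" using Cons.prems that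
    by (cases w) (auto simp: reduced_Cons)
  ultimately show ?case using Cons.IH[OF r(1)] r by auto
qed

lemma pt_reduced_len: "reduced w \<Longrightarrow> pt w = 1 + 2*int (length w) \<or> pt w = 1 - 2*int (length w)"
  using pt_reduced[of w] by (auto split: if_splits)

lemma reduced_inj: "reduced u \<Longrightarrow> reduced v \<Longrightarrow> pt u = pt v \<Longrightarrow> u = v"
proof (induction u arbitrary: v)
  case Nil then show ?case using pt_reduced[of v] by (auto split: if_splits simp: pt_def)
next
  case (Cons a u)
  then obtain b v' where v: "v = b # v'" using pt_reduced[of "a#u"] pt_reduced[of v]
    by (cases v) (auto split: if_splits)
  have ha: "a \<in> {0,1}" "b \<in> {0,1}" using Cons.prems v by (auto simp: reduced_Cons)
  have "a = b" "length u = length v'"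
    using Cons.prems pt_reduced[of "a#u"] pt_reduced[of "b#v'"] ha v by (auto split: if_splits)
  moreover have "pt u = pt v'" using Cons.prems v \<open>a = b\<close>
    by (auto simp: pt_def split: if_splits)
  ultimately show ?case using Cons v by (auto simp: reduced_Cons)
qed

lemma wplus_Suc: "wplus (Suc k) = (if even k then 0 else 1) # wplus k"
  by (simp add: wplus_def)

lemma length_wplus[simp]: "length (wplus k) = k" by (simp add: wplus_def)

lemma hd_wplus: "k > 0 \<Longrightarrow> hd (wplus k) = (if even (k - 1) then 0 else 1)"
  by (cases k) (auto simp: wplus_Suc)

lemma wplus_Nil: "wplus k = [] \<longleftrightarrow> k = 0" by (metis length_0_conv length_wplus)

lemma reduced_wplus: "reduced (wplus k)"
  by (induction k) (auto simp: wplus_Suc reduced_Cons hd_wplus wplus_Nil wplus_def[of 0])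

lemma pt_wplus: "pt (wplus k) = (if odd k then 1 - 2*int k else 2*int k + 1)"
  by (induction k) (auto simp: wplus_Suc pt_def wplus_def[of 0])

definition alt1 :: "nat \<Rightarrow> nat list" where "alt1 j = map (\<lambda>i. if even i then 1 else 0) [0..<j]"

lemma winv_wminus: "winv (wminus n) = alt1 n"
  by (simp add: winv_def wminus_def alt1_def)

lemma pt_alt1: "pt (alt1 j) = 2 * int j + 1"
proof (induction j)
  case 0 then show ?case by (simp add: alt1_def pt_def)
next
  case (Suc j)
  have "pt (alt1 (Suc j)) = foldr act (alt1 j) (pt [if even j then 1 else 0])"
    by (simp add: alt1_def pt_def)
  also have "\<dots> = 2 * int (Suc j) + 1" unfolding foldr_aff Suc
    by (simp add: alt1_def pt_def)
  finally show ?case .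
qed

lemma reduced_alt1: "reduced (alt1 j)"
  by (auto simp: reduced_def alt1_def nth_append)

lemma take_alt1: "j \<le> n \<Longrightarrow> take j (alt1 n) = alt1 j"
  by (simp add: alt1_def take_map)

lemma core:
  fixes m n k L l :: nat and p P B sa sp :: int
  assumes "l = (if even (m + n) then nat (max 0 (int m - int n))
                  else nat (max 0 (int m - int n - 1)))"
  and "k < n \<or> (k = n \<and> p = 2*int n+1)" "sp = 1 \<or> sp = -1" "p = 1 + sp*2*int k" "B = 1 \<or> B = 3" "sa = 1 \<or> sa = -1"
  and "P = sa * ((if even k then 1 else -1) * (((if even m then 1 else -1)*(B-1) + (if odd m then 1-2*int m else 2*int m+1)) - 1) + p)"
  and "P = 1+2*int L \<or> P = 1-2*int L" "L \<le> l"
  shows "P = 2*int l + 1"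
proof -
  have h3: "\<And>x y::nat. Suc (2*x) \<noteq> 2*y" by presburger
  have h4: "\<And>x y::nat. 2*y \<noteq> Suc (2*x)" by presburger
  have h5: "\<And>x y::nat. Suc (2*x) < 2*y \<longleftrightarrow> x < y" by presburger
  have h6: "\<And>x y::nat. 2*x < Suc (2*y) \<longleftrightarrow> x \<le> y" by presburger
  have li: "int l = (if even (m + n) then max 0 (int m - int n) else max 0 (int m - int n - 1))"
    using assms(1) by auto
  consider "even m" "even k" "even n" | "even m" "even k" "odd n" | "even m" "odd k" "even n" | "even m" "odd k" "odd n"
    | "odd m" "even k" "even n" | "odd m" "even k" "odd n" | "odd m" "odd k" "even n" | "odd m" "odd k" "odd n" by blast
  then show ?thesis
  proof cases
    case 1 then obtain a b c where e: "m = 2*a" "k=2*b" "n = 2*c" by (metis evenE)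
    show ?thesis using assms(2-) li unfolding e by (elim disjE conjE; simp add: h3 h4 h5 h6; auto simp: max_def)
  next
    case 2 then obtain a b c where e: "m = 2*a" "k=2*b" "n = 2*c+1" by (metis evenE oddE)
    show ?thesis using assms(2-) li unfolding e by (elim disjE conjE; simp add: h3 h4 h5 h6; auto simp: max_def)
  next
    case 3 then obtain a b c where e: "m = 2*a" "k=2*b+1" "n = 2*c" by (metis evenE oddE)
    show ?thesis using assms(2-) li unfolding e by (elim disjE conjE; simp add: h3 h4 h5 h6; auto simp: max_def)
  next
    case 4 then obtain a b c where e: "m = 2*a" "k=2*b+1" "n = 2*c+1" by (metis evenE oddE)
    show ?thesis using assms(2-) li unfolding e by (elim disjE conjE; simp add: h3 h4 h5 h6; auto simp: max_def)
  next
    case 5 then obtain a b c where e: "m = 2*a+1" "k=2*b" "n = 2*c" by (metis evenE oddE)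
    show ?thesis using assms(2-) li unfolding e by (elim disjE conjE; simp add: h3 h4 h5 h6; auto simp: max_def)
  next
    case 6 then obtain a b c where e: "m = 2*a+1" "k=2*b" "n = 2*c+1" by (metis evenE oddE)
    show ?thesis using assms(2-) li unfolding e by (elim disjE conjE; simp add: h3 h4 h5 h6; auto simp: max_def)
  next
    case 7 then obtain a b c where e: "m = 2*a+1" "k=2*b+1" "n = 2*c" by (metis evenE oddE)
    show ?thesis using assms(2-) li unfolding e by (elim disjE conjE; simp add: h3 h4 h5 h6; auto simp: max_def)
  next
    case 8 then obtain a b c where e: "m = 2*a+1" "k=2*b+1" "n = 2*c+1" by (metis evenE oddE)
    show ?thesis using assms(2-) li unfolding e by (elim disjE conjE; simp add: h3 h4 h5 h6; auto simp: max_def)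
  qed
qed

lemma l_even:
  fixes m n :: nat
  assumes "l = (if even (m + n) then nat (max 0 (int m - int n))
                  else nat (max 0 (int m - int n - 1)))"
  shows "even l"
  using assms by (auto split: if_splits; presburger)

lemma core2:
  fixes m n :: nat
  assumes L: "l = (if even (m + n) then nat (max 0 (int m - int n))
                  else nat (max 0 (int m - int n - 1)))" and m: "m > 0" and n: "\<not> (n = 0 \<and> even m)" and J: "j = m - l - 1"
  shows "j \<le> n \<and> - ((if even j then 1 else -1) * ((if odd m then 1 - 2*int m else 2*int m + 1) - 1) + (2 * int j + 1)) = 2 * int l + 1"
proof -
  consider "even m" "even n" | "even m" "odd n" | "odd m" "even n" | "odd m" "odd n" by blast
  then show ?thesis
  proof cases
    case 1 then obtain a c where mn: "m = 2*a" "n = 2*c" by (metis evenE)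
    then have a: "a \<ge> 1" "c \<ge> 1" using m n 1 by auto
    show ?thesis
    proof (cases "c \<le> a")
      case True
      then have ll: "l = 2*a - 2*c" using L mn by auto
      then have "j = 2*(c-1)+1" using J mn a True by auto
      then show ?thesis using mn a True ll by auto
    next
      case False
      then have ll: "l = 0" using L mn by auto
      then have "j = 2*(a-1)+1" using J mn a False by auto
      then show ?thesis using mn a False ll by auto
    qed
  next
    case 2 then obtain a c where mn: "m = 2*a" "n = 2*c+1" by (metis evenE oddE)
    then have a: "a \<ge> 1" using m by auto
    show ?thesis
    proof (cases "c + 1 \<le> a")
      case True
      then have ll: "l = 2*a - 2*c - 2" using L mn by auto
      then have "j = 2*c+1" using J mn a True by auto
      then show ?thesis using mn a True ll by auto
    next
      case False
      then have ll: "l = 0" using L mn by auto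
      then have "j = 2*(a-1)+1" using J mn a False by auto
      then show ?thesis using mn a False ll by auto
    qed
  next
    case 3 then obtain a c where mn: "m = 2*a+1" "n = 2*c" by (metis evenE oddE)
    show ?thesis
    proof (cases "c \<le> a")
      case True
      then have ll: "l = 2*a - 2*c" using L mn by auto
      then have "j = 2*c" using J mn True by auto
      then show ?thesis using mn True ll by auto
    next
      case False
      then have ll: "l = 0" using L mn by auto
      then have "j = 2*a" using J mn False by auto
      then show ?thesis using mn False ll by auto
    qed
  next
    case 4 then obtain a c where mn: "m = 2*a+1" "n = 2*c+1" by (metis evenE oddE)
    show ?thesis
    proof (cases "c \<le> a")
      case True
      then have ll: "l = 2*a - 2*c" using L mn by auto
      then have "j = 2*c" using J mn True by auto
      then show ?thesis using mn True ll by auto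
    next
      case False
      then have ll: "l = 0" using L mn by auto
      then have "j = 2*a" using J mn False by auto
      then show ?thesis using mn False ll by auto
    qed
  qed
qed
lemma reduced_take: "reduced w \<Longrightarrow> reduced (take j w)"
  unfolding reduced_def by (auto dest: in_set_takeD)

lemma wplus_eq: "reduced ys \<Longrightarrow> length ys = k \<Longrightarrow> even k \<Longrightarrow> (ys \<noteq> [] \<longrightarrow> hd ys = 1) \<Longrightarrow> ys = wplus k"
  apply (rule reduced_inj)
  using pt_reduced[of ys] pt_wplus[of k] reduced_wplus[of k] by (auto split: if_splits)

lemma bruhat_gt:
  assumes X: "reduced X" and l: "even l" and gt: "length X > l"
  shows "bruhat_le (wplus l) X"
proof -
  obtain x X' where XX: "X = x # X'" using gt by (cases X) auto
  have x: "x = 0 \<or> x = 1" "reduced X'" "X' \<noteq> [] \<Longrightarrow> x \<noteq> hd X'" using X XX by (auto simp: reduced_Cons)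
  have "\<exists>ys. subseq ys X \<and> ev ys = wplus l"
  proof (cases "x = 1")
    case True
    have "take l X = wplus l"
      apply (rule wplus_eq) using X gt l True XX reduced_take by (auto simp: min_def)
    moreover have "subseq (take l X) X" by (rule prefix_imp_subseq[OF take_is_prefix])
    ultimately show ?thesis using ev_reduced reduced_wplus by metis
  next
    case False
    then have x0: "x = 0" using x by auto
    have hX': "X' \<noteq> [] \<Longrightarrow> hd X' = 1" using x(2) x0 x(3) by (cases X') (auto simp: reduced_Cons)
    have "take l X' = wplus l"
      apply (rule wplus_eq) using x(2) gt l hX' XX reduced_take
      by (auto simp: min_def hd_take)
    moreover have "subseq (take l X') X" unfolding XX
      by (rule list_emb_Cons[OF prefix_imp_subseq[OF take_is_prefix]])
    ultimately show ?thesis using ev_reduced reduced_wplus by metis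
  qed
  then show ?thesis using X reduced_wplus by (auto simp: bruhat_le_def Wgrp_def)
qed

lemma pt_dc: "pt (wmult (wmult (wmult a \<sigma>) \<phi>) b) = foldr act a (foldr act \<sigma> (foldr act \<phi> (pt b)))"
  by (simp add: pt_def foldr_wmult)

lemma set_wplus: "set (wplus k) \<subseteq> {0,1}" using reduced_wplus by (simp add: reduced_def)

lemma reduced_dc: "set a \<subseteq> {0,1} \<Longrightarrow> set \<sigma> \<subseteq> {0,1} \<Longrightarrow> set \<phi> \<subseteq> {0,1} \<Longrightarrow> set b \<subseteq> {0,1} \<Longrightarrow>
   reduced (wmult (wmult (wmult a \<sigma>) \<phi>) b)"
proof -
  assume as: "set a \<subseteq> {0,1}" "set \<sigma> \<subseteq> {0,1}" "set \<phi> \<subseteq> {0,1}" "set b \<subseteq> {0,1}"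
  have "set (ev (a@\<sigma>)) \<subseteq> {0,1}" using set_ev[of "a@\<sigma>"] as by auto
  then have "set (ev (ev (a@\<sigma>)@\<phi>)) \<subseteq> {0,1}" using set_ev[of "ev (a@\<sigma>)@\<phi>"] as by auto
  then have "set (ev (ev (a@\<sigma>)@\<phi>) @ b) \<subseteq> {0,1}" using as by auto
  then show ?thesis unfolding wmult_def by (rule reduced_ev)
qed


theorem mainTheorem8:
  fixes m n :: nat
  defines "\<phi> \<equiv> wplus m" and "\<tau> \<equiv> wminus n"
  defines "l \<equiv> (if even (m + n) then nat (max 0 (int m - int n))
                  else nat (max 0 (int m - int n - 1)))"
  shows "wplus l \<in> dcoset W_Lambda1 (winv \<tau>) \<phi> W_Lambda0
       \<and> (\<forall>\<sigma> \<in> dcoset W_Lambda1 (winv \<tau>) \<phi> W_Lambda0. bruhat_le (wplus l) \<sigma>)"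
proof -
  have ld: "l = (if even (m + n) then nat (max 0 (int m - int n))
                  else nat (max 0 (int m - int n - 1)))" by (simp add: l_def)
  have T: "winv \<tau> = alt1 n" using \<tau>_def winv_wminus by simp
  have le: "even l" using l_even[OF ld] .
  have pwl: "pt (wplus l) = 2*int l + 1" using pt_wplus[of l] le by simp
  have ralt: "reduced (alt1 n)" by (rule reduced_alt1)
  have lalt: "length (alt1 j) = j" for j by (simp add: alt1_def)
  have salt: "set (alt1 j) \<subseteq> {0,1}" for j using reduced_alt1[of j] by (simp add: reduced_def)
  have part1: "wplus l \<in> dcoset W_Lambda1 (alt1 n) \<phi> W_Lambda0"
  proof (cases "m = 0 \<or> (n = 0 \<and> even m)")
    case True
    then have lm: "l = m" using l_def by auto
    have e: "wplus l = wmult (wmult (wmult [] []) \<phi>) []"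
      using lm \<phi>_def ev_reduced[OF reduced_wplus[of m]] by (simp add: wmult_def)
    have "[] \<in> bruhat_ideal (alt1 n)"
      using ralt by (auto simp: bruhat_ideal_def bruhat_le_def Wgrp_def intro!: exI[of _ "[]"])
    then show ?thesis unfolding dcoset_def W_Lambda0_def W_Lambda1_def using e by blast
  next
    case False
    define j where "j = m - l - 1"
    have c2: "j \<le> n \<and> - ((if even j then 1 else -1) * ((if odd m then 1 - 2*int m else 2*int m + 1) - 1) + (2 * int j + 1)) = 2 * int l + 1"
      using core2[OF ld _ _ j_def] False by auto
    define X where "X = wmult (wmult (wmult [0] (alt1 j)) \<phi>) []"
    have rX: "reduced X" unfolding X_def \<phi>_def
      by (rule reduced_dc) (use salt set_wplus in auto)
    have "pt X = foldr act [0] (foldr act (alt1 j) (foldr act \<phi> 1))"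
      unfolding X_def pt_dc by (simp add: pt_def)
    also have "\<dots> = 2 * int l + 1"
      using c2 unfolding foldr_aff[of "alt1 j"] foldr_aff[of \<phi>] \<phi>_def pt_wplus pt_alt1 lalt
      by (simp add: pt_wplus[unfolded pt_def])
    finally have "X = wplus l" using reduced_inj[OF rX reduced_wplus] pwl by simp
    moreover have "alt1 j \<in> bruhat_ideal (alt1 n)"
    proof -
      have "subseq (alt1 j) (alt1 n)" using take_alt1[of j n] c2 prefix_imp_subseq[OF take_is_prefix] by metis
      then show ?thesis using ralt reduced_alt1[of j] ev_reduced[OF reduced_alt1[of j]]
        by (auto simp: bruhat_ideal_def bruhat_le_def Wgrp_def)
    qed
    ultimately show ?thesis unfolding dcoset_def W_Lambda0_def W_Lambda1_def X_def
      by (intro CollectI exI[of _ "[0]"] exI[of _ "alt1 j"] exI[of _ "[]"]) auto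
  qed
  have part2: "bruhat_le (wplus l) X" if Xin: "X \<in> dcoset W_Lambda1 (alt1 n) \<phi> W_Lambda0" for X
  proof -
    obtain a \<sigma> b where X: "X = wmult (wmult (wmult a \<sigma>) \<phi>) b" and a: "a = [] \<or> a = [0]"
      and b: "b = [] \<or> b = [1]" and s: "\<sigma> \<in> bruhat_ideal (alt1 n)"
      using Xin unfolding dcoset_def W_Lambda0_def W_Lambda1_def by blast
    from s obtain ys where rs: "reduced \<sigma>" and ys: "subseq ys (alt1 n)" "ev ys = \<sigma>"
      by (auto simp: bruhat_ideal_def bruhat_le_def Wgrp_def)
    have k: "length \<sigma> < n \<or> \<sigma> = alt1 n"
    proof -
      have "length \<sigma> \<le> length ys" using ys length_ev by blast
      moreover have "length ys \<le> n" using list_emb_length[OF ys(1)] lalt by simp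
      moreover have "\<sigma> = alt1 n" if "length ys = n"
        using subseq_same_length[OF ys(1)] that lalt ys(2) ev_reduced[OF ralt] by simp
      ultimately show ?thesis by linarith
    qed
    obtain sp where sp: "sp = 1 \<or> sp = -1" "pt \<sigma> = 1 + sp*2*int (length \<sigma>)"
      using pt_reduced_len[OF rs] by (metis mult.left_neutral mult_minus_left diff_conv_add_uminus mult.assoc)
    have rX: "reduced X" unfolding X \<phi>_def
      by (rule reduced_dc) (use a b rs set_wplus in \<open>auto simp: reduced_def\<close>)
    obtain L where L: "L = length X" by simp
    show ?thesis
    proof (cases "l < L")
      case True then show ?thesis using bruhat_gt[OF rX le] L by simp
    next
      case False
      define sa :: int where "sa = (if a = [] then 1 else -1)"
      define B :: int where "B = pt b"
      have sa: "sa = 1 \<or> sa = -1" "foldr act a y = sa * y" for y using a sa_def by auto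
      have B: "B = 1 \<or> B = 3" using b B_def by (auto simp: pt_def)
      have kk: "length \<sigma> < n \<or> (length \<sigma> = n \<and> pt \<sigma> = 2*int n+1)"
        using k pt_alt1 lalt by auto
      have "pt X = sa * ((if even (length \<sigma>) then 1 else -1) * (((if even m then 1 else -1)*(B-1) + (if odd m then 1-2*int m else 2*int m+1)) - 1) + pt \<sigma>)"
      proof -
        have f\<phi>: "foldr act \<phi> B = (if even m then 1 else -1)*(B-1) + (if odd m then 1-2*int m else 2*int m+1)"
          using foldr_aff[of \<phi> B] pt_wplus[of m] unfolding \<phi>_def by simp
        have "pt X = foldr act a (foldr act \<sigma> (foldr act \<phi> B))" unfolding X pt_dc B_def ..
        then show ?thesis by (simp only: sa(2) foldr_aff[of \<sigma>] f\<phi>)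
      qed
      moreover have "pt X = 1 + 2*int L \<or> pt X = 1 - 2*int L" using pt_reduced_len[OF rX] L by simp
      moreover have "L \<le> l" using False by simp
      ultimately have "pt X = 2 * int l + 1"
        by (rule core[OF ld kk sp(1) sp(2) B sa(1)])
      then have "X = wplus l" using reduced_inj[OF rX reduced_wplus] pwl by simp
      then show ?thesis using rX ev_reduced[OF rX]
        by (auto simp: bruhat_le_def Wgrp_def intro!: exI[of _ X])
    qed
  qed
  show ?thesis using part1 part2 T by auto
qed

end
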